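(* Let $s\in\{+1,-1\}$ and $d\ge1$. Let $f\in L^1(\mathbb T^d)$ be real-valued and nonzero, with real-valued Fourier coefficients $\widehat f$ (e.g. $f$ even) and $\widehat f\in\ell^1(\mathbb Z^d)$, such that $\int_{\mathbb T^d}f\,d\lambda\le0$ and $\sum_{m\in\mathbb Z^d}s\widehat f(m)\le0$. Then $$\lambda(\{x\in\mathbb T^d: f(x)<0\})\cdot\#\{m\in\mathbb Z^d: s\widehat f(m)<0\}\ \ge\ \frac1{16}.$$
   Context: $\mathbb T^d=\mathbb R^d/\mathbb Z^d$, identified with $[-\tfrac12,\tfrac12]^d$, with Haar probability measure $\lambda$ (Lebesgue measure on $[-\tfrac12,\tfrac12]^d$). $\widehat f(m)=\int_{\mathbb T^d}f(x)e^{-2\pi i\langle x,m\rangle}d\lambda(x)$ for $m\in\mathbb Z^d$. *)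

theory Defs
  imports "HOL-Analysis.Analysis"
begin

text \<open>The torus T^d = R^d / Z^d, identified with the box [-1/2,1/2]^d; the dimension d
  is the cardinality of the finite index type 'n.\<close>
definition torus_box :: "(real^'n) set" where
  "torus_box = {x. \<forall>i. -1/2 \<le> x $ i \<and> x $ i \<le> 1/2}"

definition haar_torus :: "(real^'n) measure" where
  "haar_torus = lebesgue_on torus_box"

definition lat_inner :: "real^'n \<Rightarrow> int^'n \<Rightarrow> real" where
  "lat_inner x m = (\<Sum>i\<in>UNIV. x $ i * real_of_int (m $ i))"

definition fourier_coeff :: "(real^'n \<Rightarrow> real) \<Rightarrow> int^'n \<Rightarrow> complex" where
  "fourier_coeff f m =
     (\<integral>x. complex_of_real (f x) * cis (- 2 * pi * lat_inner x m) \<partial>haar_torus)"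

end

theory Submission
  imports Defs
begin
lemma cis_int_integral:
  fixes k :: int
  shows "(\<integral>t. indicator {-1/2..1/2::real} t *\<^sub>R cis (2*pi*k*t) \<partial>lborel) = (if k = 0 then 1 else 0)"
proof (cases "k = 0")
  case True
  then show ?thesis by simp
next
  case False
  define F where "F t = inverse (\<i>*(2*pi*k)) * cis (2*pi*k*t)" for t :: real
  have d: "(F has_vector_derivative cis (2*pi*k*t)) (at t within {-1/2..1/2})" for t
  proof -
    have "((\<lambda>t. cis (2*pi*k*t)) has_derivative (\<lambda>h. (2*pi*k*h) *\<^sub>R (\<i> * cis (2*pi*k*t)))) (at t within {-1/2..1/2})"
      by (rule has_derivative_cis) (auto intro!: derivative_eq_intros)
    then have "((\<lambda>t. inverse (\<i>*(2*pi*k)) * cis (2*pi*k*t)) has_derivative (\<lambda>h. inverse (\<i>*(2*pi*k)) * ((2*pi*k*h) *\<^sub>R (\<i> * cis (2*pi*k*t))))) (at t within {-1/2..1/2})"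
      by (rule has_derivative_mult_right)
    moreover have "(\<lambda>h. inverse (\<i>*(2*pi*k)) * ((2*pi*k*h) *\<^sub>R (\<i> * cis (2*pi*k*t)))) = (\<lambda>h. h *\<^sub>R cis (2*pi*k*t))"
      using False by (auto simp: scaleR_conv_of_real field_simps)
    ultimately show ?thesis unfolding has_vector_derivative_def F_def by simp
  qed
  have "(\<integral>t. indicator {-1/2..1/2::real} t *\<^sub>R cis (2*pi*k*t) \<partial>lborel) = F (1/2) - F (-1/2)"
    by (rule integral_FTC_Icc) (auto intro!: d[simplified] continuous_intros)
  also have "F (1/2) = F (-1/2)"
  proof -
    have "cis (2*pi*k*(1/2)) = cis (2*pi*k*(-1/2)) * cis (2*pi*k)"
      by (simp add: cis_mult algebra_simps)
    also have "cis (2*pi*k) = 1" using cis_multiple_2pi[of "real_of_int k"] by simp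
    finally show ?thesis unfolding F_def by simp
  qed
  finally show ?thesis using False by simp
qed

lemma torus_box_cbox: "(torus_box :: (real^'n) set) = cbox (\<chi> i. -1/2) (\<chi> i. 1/2)"
  by (auto simp: torus_box_def mem_box_cart)

lemma torus_box_sets[measurable]: "torus_box \<in> sets lborel"
  by (simp add: torus_box_cbox)

lemma torus_box_lebesgue[measurable]: "torus_box \<in> sets lebesgue"
  by (simp add: torus_box_cbox)

lemma Basis_vec_real: "(Basis :: (real^'n) set) = range (\<lambda>i. axis i 1)"
  by (auto simp: Basis_vec_def)

lemma sum_Basis_component:
  fixes \<phi> :: "real^'n \<Rightarrow> real"
  shows "(\<Sum>b\<in>Basis. \<phi> b *\<^sub>R b) $ i = \<phi> (axis i 1)"
proof -
  have inj: "inj (\<lambda>i::'n. axis i (1::real))" by (auto simp: inj_def axis_eq_axis)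
  have "(\<Sum>b\<in>Basis. \<phi> b *\<^sub>R b) $ i = (\<Sum>b\<in>Basis. \<phi> b * b $ i)"
    by (simp add: sum_component)
  also have "\<dots> = (\<Sum>j\<in>UNIV. \<phi> (axis j 1) * axis j 1 $ i)"
    unfolding Basis_vec_real by (subst sum.reindex[OF inj]) simp
  also have "\<dots> = \<phi> (axis i 1)"
    by (simp add: axis_def if_distrib cong: if_cong)
  finally show ?thesis .
qed

lemma cis_sum: "finite I \<Longrightarrow> cis (\<Sum>i\<in>I. f i) = (\<Prod>i\<in>I. cis (f i))"
  by (induction I rule: finite_induct) (auto simp: cis_mult[symmetric])

lemma indicator_torus_box:
  "indicator torus_box x = (\<Prod>i\<in>UNIV. indicator {-1/2..1/2::real} (x $ i) :: real)"
proof (cases "x \<in> torus_box")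
  case True
  then show ?thesis by (auto simp: torus_box_def indicator_def)
next
  case False
  then obtain i where "x $ i \<notin> {-1/2..1/2}" by (auto simp: torus_box_def)
  then have z: "indicator {-1/2..1/2::real} (x $ i) = (0::real)" by simp
  have "(\<Prod>i\<in>UNIV. indicator {-1/2..1/2::real} (x $ i) :: real) = 0"
    using z by (intro prod_zero) auto
  then show ?thesis using False by simp
qed

lemma continuous_lat_inner[continuous_intros]:
  "continuous_on S (\<lambda>x. lat_inner x m)"
  unfolding lat_inner_def by (intro continuous_intros)

lemma measurable_lat_inner[measurable]:
  "(\<lambda>x. lat_inner x m) \<in> borel_measurable borel"
  by (intro borel_measurable_continuous_onI continuous_intros)

lemma measurable_cis[measurable]: "cis \<in> borel_measurable borel"
  by (intro borel_measurable_continuous_onI continuous_intros)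

lemma measurable_ee[measurable]:
  "(\<lambda>x. cis (2*pi*lat_inner x m)) \<in> borel_measurable borel"
  by (intro borel_measurable_continuous_onI continuous_intros)

interpretation lborel_prod: product_sigma_finite "\<lambda>_. lborel"
  by unfold_locales

lemma haar_integral_eq_lborel:
  fixes F :: "real^'n \<Rightarrow> 'b::{banach, second_countable_topology}"
  assumes [measurable]: "F \<in> borel_measurable borel"
  shows "(\<integral>x. F x \<partial>haar_torus) = (\<integral>x. indicator torus_box x *\<^sub>R F x \<partial>lborel)"
  unfolding haar_torus_def
  by (subst integral_restrict_space) (auto simp: integral_completion)

lemma integral_ee:
  fixes m :: "int^'n"
  shows "(\<integral>x. cis (2*pi*lat_inner x m) \<partial>haar_torus) = (if m = 0 then 1 else 0)"
proof -
  define T :: "(real^'n \<Rightarrow> real) \<Rightarrow> real^'n" where "T \<phi> = (\<Sum>b\<in>Basis. \<phi> b *\<^sub>R b)" for \<phi>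
  define G where "G x = indicator torus_box x *\<^sub>R cis (2*pi*lat_inner x m)" for x :: "real^'n"
  define j where "j b = (SOME i. b = axis i (1::real))" for b :: "real^'n"
  have jax: "j (axis i 1) = i" for i unfolding j_def
    by (rule some_equality) (auto simp: axis_eq_axis)
  define H where "H b t = indicator {-1/2..1/2::real} t *\<^sub>R cis (2*pi* of_int (m $ j b)*t)" for b t
  have inj: "inj (\<lambda>i::'n. axis i (1::real))" by (auto simp: inj_def axis_eq_axis)
  have GT: "G (T \<phi>) = (\<Prod>b\<in>Basis. H b (\<phi> b))" for \<phi>
  proof -
    have "G (T \<phi>) = (\<Prod>i\<in>UNIV. H (axis i 1) (\<phi> (axis i 1)))"
      unfolding G_def H_def indicator_torus_box lat_inner_def T_def sum_Basis_component jax
      by (simp add: scaleR_conv_of_real cis_sum prod.distrib sum_distrib_left mult_ac)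
    also have "\<dots> = (\<Prod>b\<in>Basis. H b (\<phi> b))"
      unfolding Basis_vec_real by (subst prod.reindex[OF inj]) simp
    finally show ?thesis .
  qed
  have [measurable]: "T \<in> measurable (\<Pi>\<^sub>M b\<in>Basis. lborel) borel"
    unfolding T_def by measurable
  have [measurable]: "G \<in> borel_measurable borel" unfolding G_def by measurable
  have "(\<integral>x. cis (2*pi*lat_inner x m) \<partial>haar_torus) = (\<integral>x. G x \<partial>lborel)"
    unfolding G_def by (rule haar_integral_eq_lborel) measurable
  also have "\<dots> = (\<integral>\<phi>. G (T \<phi>) \<partial>(\<Pi>\<^sub>M b\<in>Basis. lborel))"
    by (subst lborel_eq) (simp add: integral_distr T_def[abs_def])
  also have "\<dots> = (\<Prod>b\<in>Basis. (\<integral>t. H b t \<partial>lborel))"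
    unfolding GT
  proof (rule lborel_prod.product_integral_prod)
    fix b :: "real^'n"
    show "integrable lborel (H b)"
      using borel_integrable_atLeastAtMost'[of "-1/2" "1/2" "\<lambda>t. cis (2*pi* of_int (m $ j b)*t)"]
      unfolding H_def[abs_def] set_integrable_def by (simp add: continuous_intros)
  qed simp
  also have "\<dots> = (\<Prod>i\<in>UNIV. (\<integral>t. H (axis i 1) t \<partial>lborel))"
    unfolding Basis_vec_real by (subst prod.reindex[OF inj]) simp
  also have "\<dots> = (\<Prod>i\<in>UNIV. if m $ i = 0 then 1 else 0)"
    unfolding H_def jax cis_int_integral by simp
  also have "\<dots> = (if m = 0 then 1 else 0)"
  proof (cases "m = 0")
    case True then show ?thesis by simp
  next
    case False
    then obtain i where "m $ i \<noteq> 0" by (auto simp: vec_eq_iff)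
    then show ?thesis using False by (subst prod_zero) (auto intro!: bexI[of _ i])
  qed
  finally show ?thesis .
qed

definition ee :: "int^'n \<Rightarrow> real^'n \<Rightarrow> complex" where
  "ee m x = cis (2*pi*lat_inner x m)"

lemma lat_inner_add: "lat_inner x (m + k) = lat_inner x m + lat_inner x k"
  by (simp add: lat_inner_def sum.distrib algebra_simps)

lemma lat_inner_uminus: "lat_inner x (- m) = - lat_inner x m"
  by (simp add: lat_inner_def sum_negf)

lemma lat_inner_zero[simp]: "lat_inner x 0 = 0"
  by (simp add: lat_inner_def)

lemma lat_inner_axis: "lat_inner x (axis i 1) = x $ i"
  by (simp add: lat_inner_def axis_def if_distrib cong: if_cong)

lemma ee_add: "ee m x * ee k x = ee (m + k) x"
  by (simp add: ee_def cis_mult lat_inner_add algebra_simps)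

lemma ee_zero[simp]: "ee 0 x = 1" by (simp add: ee_def)

lemma norm_ee[simp]: "norm (ee m x) = 1" by (simp add: ee_def)

lemma measurable_ee'[measurable]: "ee m \<in> borel_measurable borel"
  unfolding ee_def[abs_def] by measurable

lemma continuous_ee[continuous_intros]: "continuous_on S (ee m)"
  unfolding ee_def[abs_def] by (intro continuous_intros)

definition trig :: "(real^'n \<Rightarrow> complex) \<Rightarrow> bool" where
  "trig \<phi> \<longleftrightarrow> (\<exists>F c. finite F \<and> \<phi> = (\<lambda>x. \<Sum>m\<in>F. c m * ee m x))"

lemma trig_single: "trig (\<lambda>x. a * ee m x)"
  unfolding trig_def by (rule exI[of _ "{m}"], rule exI[of _ "\<lambda>_. a"]) simp

lemma trig_const: "trig (\<lambda>x. a)"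
  using trig_single[of a 0] by simp

lemma trig_add: "trig \<phi> \<Longrightarrow> trig \<psi> \<Longrightarrow> trig (\<lambda>x. \<phi> x + \<psi> x)"
proof -
  assume "trig \<phi>" "trig \<psi>"
  then obtain F c G d where F: "finite F" "\<phi> = (\<lambda>x. \<Sum>m\<in>F. c m * ee m x)"
    and G: "finite G" "\<psi> = (\<lambda>x. \<Sum>m\<in>G. d m * ee m x)"
    unfolding trig_def by blast
  define e where "e m = (if m \<in> F then c m else 0) + (if m \<in> G then d m else 0)" for m
  have "(\<lambda>x. \<phi> x + \<psi> x) = (\<lambda>x. \<Sum>m\<in>F \<union> G. e m * ee m x)"
  proof
    fix x
    have "(\<Sum>m\<in>F \<union> G. e m * ee m x) = (\<Sum>m\<in>F \<union> G. (if m \<in> F then c m * ee m x else 0))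
        + (\<Sum>m\<in>F \<union> G. (if m \<in> G then d m * ee m x else 0))"
      unfolding e_def sum.distrib[symmetric] by (intro sum.cong) (auto simp: distrib_right)
    also have "\<dots> = \<phi> x + \<psi> x"
      using F G by (simp add: sum.If_cases Int_absorb1 Int_absorb2)
    finally show "\<phi> x + \<psi> x = (\<Sum>m\<in>F \<union> G. e m * ee m x)" by simp
  qed
  then show ?thesis unfolding trig_def using F G by blast
qed

lemma trig_sum: "finite I \<Longrightarrow> (\<And>i. i \<in> I \<Longrightarrow> trig (f i)) \<Longrightarrow> trig (\<lambda>x. \<Sum>i\<in>I. f i x)"
  by (induction I rule: finite_induct) (auto intro: trig_add trig_const)

lemma trig_mult: "trig \<phi> \<Longrightarrow> trig \<psi> \<Longrightarrow> trig (\<lambda>x. \<phi> x * \<psi> x)"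
proof -
  assume "trig \<phi>" "trig \<psi>"
  then obtain F c G d where F: "finite F" "\<phi> = (\<lambda>x. \<Sum>m\<in>F. c m * ee m x)"
    and G: "finite G" "\<psi> = (\<lambda>x. \<Sum>m\<in>G. d m * ee m x)"
    unfolding trig_def by blast
  have eq: "(\<lambda>x. \<phi> x * \<psi> x) = (\<lambda>x. \<Sum>m\<in>F. \<Sum>k\<in>G. (c m * d k) * ee (m + k) x)"
  proof
    fix x
    show "\<phi> x * \<psi> x = (\<Sum>m\<in>F. \<Sum>k\<in>G. (c m * d k) * ee (m + k) x)"
      unfolding F G sum_product by (intro sum.cong refl) (simp add: ee_add[symmetric] mult_ac)
  qed
  have "trig (\<lambda>x. \<Sum>m\<in>F. \<Sum>k\<in>G. (c m * d k) * ee (m + k) x)"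
    using F G by (intro trig_sum trig_single) auto
  then show ?thesis unfolding eq .
qed

lemma trig_scale: "trig \<phi> \<Longrightarrow> trig (\<lambda>x. a * \<phi> x)"
  using trig_mult[OF trig_const] by blast

lemma trig_cos: "trig (\<lambda>x. complex_of_real (cos (2*pi*(x $ i))))"
proof -
  have eq: "(\<lambda>x. complex_of_real (cos (2*pi*(x $ i)))) =
        (\<lambda>x. (1/2) * ee (axis i 1) x + (1/2) * ee (- axis i 1) x)"
    by (auto simp: ee_def lat_inner_uminus lat_inner_axis cis.ctr complex_eq_iff intro!: ext)
  show ?thesis unfolding eq by (rule trig_add[OF trig_single trig_single])
qed

lemma trig_sin: "trig (\<lambda>x. complex_of_real (sin (2*pi*(x $ i))))"
proof -
  have eq: "(\<lambda>x. complex_of_real (sin (2*pi*(x $ i)))) =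
        (\<lambda>x. (-\<i>/2) * ee (axis i 1) x + (\<i>/2) * ee (- axis i 1) x)"
    by (auto simp: ee_def lat_inner_uminus lat_inner_axis cis.ctr complex_eq_iff intro!: ext)
  show ?thesis unfolding eq by (rule trig_add[OF trig_single trig_single])
qed

definition E :: "real^'n \<Rightarrow> (real^'n) \<times> (real^'n)" where
  "E x = ((\<chi> i. cos (2*pi*(x $ i))), (\<chi> i. sin (2*pi*(x $ i))))"

lemma trig_E_inner:
  assumes "b \<in> Basis"
  shows "trig (\<lambda>x. complex_of_real (E x \<bullet> b))"
proof -
  from assms obtain i where "b = (axis i 1, 0) \<or> b = (0, axis i 1)"
    by (auto simp: Basis_prod_def Basis_vec_def)
  then show ?thesis
    by (auto simp: E_def inner_Pair inner_axis trig_cos trig_sin)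
qed

lemma trig_linear:
  assumes "bounded_linear (f :: (real^'n) \<times> (real^'n) \<Rightarrow> real)"
  shows "trig (\<lambda>x. complex_of_real (f (E x)))"
proof -
  have lin: "linear f" using assms by (rule bounded_linear.linear)
  have fy: "f y = (\<Sum>b\<in>Basis. (y \<bullet> b) * f b)" for y
  proof -
    have "f y = f (\<Sum>b\<in>Basis. (y \<bullet> b) *\<^sub>R b)" by (simp only: euclidean_representation)
    also have "\<dots> = (\<Sum>b\<in>Basis. f ((y \<bullet> b) *\<^sub>R b))"
      by (rule linear_sum[OF lin])
    also have "\<dots> = (\<Sum>b\<in>Basis. (y \<bullet> b) * f b)"
      by (intro sum.cong refl) (simp add: linear_cmul[OF lin])
    finally show ?thesis .
  qed
  have "trig (\<lambda>x. \<Sum>b\<in>Basis. complex_of_real (f b) * complex_of_real (E x \<bullet> b))"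
  proof (rule trig_sum)
    fix b :: "(real^'n) \<times> (real^'n)" assume "b \<in> Basis"
    then show "trig (\<lambda>x. complex_of_real (f b) * complex_of_real (E x \<bullet> b))"
      by (rule trig_scale[OF trig_E_inner])
  qed simp
  moreover have "(\<lambda>x. complex_of_real (f (E x))) = (\<lambda>x. \<Sum>b\<in>Basis. complex_of_real (f b) * complex_of_real (E x \<bullet> b))"
    by (rule ext, subst fy) (simp add: mult.commute)
  ultimately show ?thesis by simp
qed

lemma trig_poly:
  assumes "real_polynomial_function p"
  shows "trig (\<lambda>x. complex_of_real (p (E x)))"
  using assms
proof induction
  case (linear f)
  then show ?case by (rule trig_linear)
next
  case (const c) then show ?case by (rule trig_const)
next
  case (add f g) show ?case unfolding of_real_add by (rule trig_add[OF add.IH])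
next
  case (mult f g) show ?case unfolding of_real_mult by (rule trig_mult[OF mult.IH])
qed

lemma space_haar[simp]: "space haar_torus = torus_box"
  unfolding haar_torus_def by (simp add: space_restrict_space)

lemma borel_haar:
  "f \<in> borel_measurable borel \<Longrightarrow> f \<in> borel_measurable haar_torus"
  unfolding haar_torus_def
  by (intro measurable_restrict_space1 measurable_completion) (simp add: measurable_lborel1)

lemma sets_haar: "A \<in> sets borel \<Longrightarrow> A \<inter> torus_box \<in> sets haar_torus"
  unfolding haar_torus_def
  by (auto simp: sets_restrict_space)

lemma emeasure_haar_box: "emeasure haar_torus (torus_box :: (real^'n::finite) set) = 1"
proof -
  have "emeasure haar_torus (torus_box :: (real^'n::finite) set) = emeasure lborel (torus_box :: (real^'n::finite) set)"
    unfolding haar_torus_def by (subst emeasure_restrict_space) (auto simp: emeasure_completion main_part[OF torus_box_sets])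
  also have "\<dots> = 1"
    unfolding torus_box_cbox emeasure_lborel_cbox_eq
    unfolding Basis_vec_real by (subst prod.reindex) (auto simp: inj_def axis_eq_axis inner_axis)
  finally show ?thesis .
qed

interpretation haar: finite_measure haar_torus
  by (rule finite_measureI) (simp add: emeasure_haar_box)

lemma integrable_mult_bounded:
  fixes h g :: "real^'n::finite \<Rightarrow> complex"
  assumes "integrable haar_torus h" "g \<in> borel_measurable haar_torus"
    and "\<And>x. x \<in> torus_box \<Longrightarrow> norm (g x) \<le> B"
  shows "integrable haar_torus (\<lambda>x. h x * g x)"
proof -
  have "integrable haar_torus (\<lambda>x. complex_of_real B * h x)" using assms(1) by simp
  moreover have "(\<lambda>x. h x * g x) \<in> borel_measurable haar_torus" using assms(1,2) by measurable
  moreover have "AE x in haar_torus. norm (h x * g x) \<le> norm (complex_of_real B * h x)"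
  proof (rule AE_I2)
    fix x :: "real^'n" assume "x \<in> space haar_torus"
    then have "norm (g x) \<le> B" using assms(3) by simp
    then have "norm (h x) * norm (g x) \<le> norm (h x) * \<bar>B\<bar>"
      by (intro mult_left_mono) auto
    then show "norm (h x * g x) \<le> norm (complex_of_real B * h x)"
      by (simp add: norm_mult mult.commute)
  qed
  ultimately show ?thesis by (rule Bochner_Integration.integrable_bound)
qed

lemma integral_trig_zero:
  assumes h: "integrable haar_torus h" and z: "\<And>m. (\<integral>x. h x * ee m x \<partial>haar_torus) = 0"
    and "trig \<phi>"
  shows "(\<integral>x. h x * \<phi> x \<partial>haar_torus) = 0"
proof -
  from \<open>trig \<phi>\<close> obtain F c where F: "finite F" "\<phi> = (\<lambda>x. \<Sum>m\<in>F. c m * ee m x)"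
    unfolding trig_def by blast
  have int: "integrable haar_torus (\<lambda>x. h x * ee m x)" for m
    by (rule integrable_mult_bounded[OF h, of _ 1]) (auto intro: borel_haar)
  have "(\<integral>x. h x * \<phi> x \<partial>haar_torus) = (\<integral>x. (\<Sum>m\<in>F. c m * (h x * ee m x)) \<partial>haar_torus)"
    unfolding F by (simp add: sum_distrib_left mult_ac)
  also have "\<dots> = (\<Sum>m\<in>F. c m * (\<integral>x. h x * ee m x \<partial>haar_torus))"
    using int by (simp add: integral_sum)
  also have "\<dots> = 0" by (simp add: z)
  finally show ?thesis .
qed

lemma continuous_E[continuous_intros]: "continuous_on S E"
  unfolding E_def by (intro continuous_intros continuous_on_vec_lambda)

lemma compact_box: "compact torus_box"
  by (simp add: torus_box_cbox)

lemma borel_haar_cont: "continuous_on UNIV f \<Longrightarrow> f \<in> borel_measurable haar_torus"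
  by (intro borel_haar borel_measurable_continuous_onI)

lemma SW_zero:
  fixes h :: "real^'n::finite \<Rightarrow> complex" and \<psi> :: "(real^'n) \<times> (real^'n) \<Rightarrow> real"
  assumes h: "integrable haar_torus h" and z: "\<And>m. (\<integral>x. h x * ee m x \<partial>haar_torus) = 0"
    and \<psi>: "continuous_on UNIV \<psi>"
  shows "(\<integral>x. h x * complex_of_real (\<psi> (E x)) \<partial>haar_torus) = 0"
proof -
  define S where "S = E ` (torus_box :: (real^'n) set)"
  have S: "compact S" unfolding S_def by (intro compact_continuous_image continuous_intros compact_box)
  have ES: "x \<in> torus_box \<Longrightarrow> E x \<in> S" for x unfolding S_def by auto
  have c\<psi>: "continuous_on UNIV (\<lambda>x. complex_of_real (\<psi> (E x)))"
    by (intro continuous_on_of_real continuous_on_compose2[OF \<psi> continuous_E]) auto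
  obtain B where B: "\<And>y. y \<in> S \<Longrightarrow> \<bar>\<psi> y\<bar> \<le> B"
    using compact_imp_bounded[OF compact_continuous_image[OF continuous_on_subset[OF \<psi>] S]]
    unfolding bounded_real by auto
  have int\<psi>: "integrable haar_torus (\<lambda>x. h x * complex_of_real (\<psi> (E x)))"
    by (rule integrable_mult_bounded[OF h borel_haar_cont[OF c\<psi>], of B]) (simp add: B ES)
  define C where "C = (\<integral>x. norm (h x) \<partial>haar_torus)"
  have C: "C \<ge> 0" unfolding C_def by simp
  have bound: "norm (\<integral>x. h x * complex_of_real (\<psi> (E x)) \<partial>haar_torus) \<le> \<epsilon> * C" if eps: "\<epsilon> > 0" for \<epsilon>
  proof -
    obtain p where p: "polynomial_function p" "\<And>y. y \<in> S \<Longrightarrow> norm (\<psi> y - p y) < \<epsilon>"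
      using Stone_Weierstrass_polynomial_function[OF S continuous_on_subset[OF \<psi> subset_UNIV] eps] by auto
    have tp: "trig (\<lambda>x. complex_of_real (p (E x)))"
      using p(1) by (intro trig_poly) (simp add: real_polynomial_function_eq)
    have cp: "continuous_on UNIV p" using p(1) by (rule continuous_on_polymonial_function)
    have cpE: "continuous_on UNIV (\<lambda>x. complex_of_real (p (E x)))"
      by (intro continuous_on_of_real continuous_on_compose2[OF cp continuous_E]) auto
    have pB: "norm (complex_of_real (p (E x))) \<le> B + \<epsilon>" if "x \<in> torus_box" for x
    proof -
      have "\<bar>\<psi> (E x) - p (E x)\<bar> < \<epsilon>" using p(2)[OF ES[OF that]] by simp
      moreover have "\<bar>\<psi> (E x)\<bar> \<le> B" using B[OF ES[OF that]] .
      ultimately show ?thesis by simp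
    qed
    have intp: "integrable haar_torus (\<lambda>x. h x * complex_of_real (p (E x)))"
      by (rule integrable_mult_bounded[OF h borel_haar_cont[OF cpE], of "B + \<epsilon>"]) (rule pB)
    have "(\<integral>x. h x * complex_of_real (\<psi> (E x)) \<partial>haar_torus)
        = (\<integral>x. h x * complex_of_real (\<psi> (E x)) \<partial>haar_torus) - (\<integral>x. h x * complex_of_real (p (E x)) \<partial>haar_torus)"
      using integral_trig_zero[OF h z tp] by simp
    also have "\<dots> = (\<integral>x. h x * complex_of_real (\<psi> (E x)) - h x * complex_of_real (p (E x)) \<partial>haar_torus)"
      using int\<psi> intp by simp
    finally have eq: "(\<integral>x. h x * complex_of_real (\<psi> (E x)) \<partial>haar_torus) = \<dots>" .
    have "norm (\<integral>x. h x * complex_of_real (\<psi> (E x)) - h x * complex_of_real (p (E x)) \<partial>haar_torus)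
        \<le> (\<integral>x. norm (h x * complex_of_real (\<psi> (E x)) - h x * complex_of_real (p (E x))) \<partial>haar_torus)"
      by (rule integral_norm_bound)
    also have "\<dots> \<le> (\<integral>x. norm (h x) * \<epsilon> \<partial>haar_torus)"
    proof (rule integral_mono)
      show "integrable haar_torus (\<lambda>x. norm (h x * complex_of_real (\<psi> (E x)) - h x * complex_of_real (p (E x))))"
        using int\<psi> intp by simp
      show "integrable haar_torus (\<lambda>x. norm (h x) * \<epsilon>)" using h by simp
      fix x :: "real^'n" assume "x \<in> space haar_torus"
      then have "\<bar>\<psi> (E x) - p (E x)\<bar> \<le> \<epsilon>" using p(2)[OF ES[of x]] by simp
      then have "norm (h x) * \<bar>\<psi> (E x) - p (E x)\<bar> \<le> norm (h x) * \<epsilon>"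
        by (intro mult_left_mono) auto
      moreover have "h x * complex_of_real (\<psi> (E x)) - h x * complex_of_real (p (E x))
          = h x * complex_of_real (\<psi> (E x) - p (E x))" by (simp add: algebra_simps)
      ultimately show "norm (h x * complex_of_real (\<psi> (E x)) - h x * complex_of_real (p (E x))) \<le> norm (h x) * \<epsilon>"
        by (simp add: norm_mult of_real_diff[symmetric] del: of_real_diff)
    qed
    also have "\<dots> = \<epsilon> * C" unfolding C_def by simp
    finally show ?thesis using eq by simp
  qed
  have "norm (\<integral>x. h x * complex_of_real (\<psi> (E x)) \<partial>haar_torus) \<le> 0"
  proof (rule field_le_epsilon)
    fix e :: real assume e: "0 < e"
    have "norm (\<integral>x. h x * complex_of_real (\<psi> (E x)) \<partial>haar_torus) \<le> (e / (C + 1)) * C"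
      using e C by (intro bound) auto
    also have "\<dots> \<le> e" using e C by (simp add: field_simps)
    finally show "norm (\<integral>x. h x * complex_of_real (\<psi> (E x)) \<partial>haar_torus) \<le> 0 + e" by simp
  qed
  then show ?thesis by simp
qed

lemma open_V_zero:
  fixes h :: "real^'n::finite \<Rightarrow> complex"
  assumes h: "integrable haar_torus h" and z: "\<And>m. (\<integral>x. h x * ee m x \<partial>haar_torus) = 0"
    and V: "open (V :: ((real^'n) \<times> (real^'n)) set)"
  shows "(\<integral>x. h x * indicator V (E x) \<partial>haar_torus) = 0"
proof (cases "V = UNIV")
  case True
  then show ?thesis using z[of 0] by simp
next
  case False
  define \<psi> where "\<psi> k y = min 1 (real k * infdist y (- V))" for k :: nat and y
  have c\<psi>: "continuous_on UNIV (\<psi> k)" for k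
    unfolding \<psi>_def[abs_def] by (intro continuous_intros continuous_on_infdist continuous_on_id)
  have s0: "(\<integral>x. h x * complex_of_real (\<psi> k (E x)) \<partial>haar_torus) = 0" for k
    by (rule SW_zero[OF h z c\<psi>])
  have Em: "E \<in> borel_measurable borel" by (intro borel_measurable_continuous_onI continuous_E)
  have "(indicator V :: _ \<Rightarrow> complex) \<in> borel_measurable borel"
    using V by (intro borel_measurable_indicator borel_open)
  then have mV: "(\<lambda>x. indicator V (E x) :: complex) \<in> borel_measurable borel"
    by (rule measurable_compose[OF Em])
  have lim: "(\<lambda>k. h x * complex_of_real (\<psi> k (E x))) \<longlonglongrightarrow> h x * indicator V (E x)" for x
  proof (cases "E x \<in> V")
    case True
    have pos: "infdist (E x) (- V) > 0"
      using True False V by (intro infdist_pos_not_in_closed) auto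
    have "eventually (\<lambda>k. \<psi> k (E x) = 1) sequentially"
    proof -
      obtain N :: nat where N: "real N > 1 / infdist (E x) (- V)"
        using reals_Archimedean2 by blast
      show ?thesis
      proof (rule eventually_sequentiallyI[of N])
        fix k assume "N \<le> k"
        then have "real k * infdist (E x) (- V) \<ge> real N * infdist (E x) (- V)"
          using pos by (intro mult_right_mono) auto
        moreover have "real N * infdist (E x) (- V) > 1"
          using N pos by (simp add: field_simps)
        ultimately show "\<psi> k (E x) = 1" unfolding \<psi>_def by simp
      qed
    qed
    then have "eventually (\<lambda>k. h x * complex_of_real (\<psi> k (E x)) = h x * indicator V (E x)) sequentially"
      by eventually_elim (use True in simp)
    then show ?thesis by (rule tendsto_eventually)
  next
    case False
    then have "\<psi> k (E x) = 0" for k unfolding \<psi>_def by simp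
    then show ?thesis using False by simp
  qed
  have "(\<lambda>k. (\<integral>x. h x * complex_of_real (\<psi> k (E x)) \<partial>haar_torus)) \<longlonglongrightarrow> (\<integral>x. h x * indicator V (E x) \<partial>haar_torus)"
  proof (rule integral_dominated_convergence[where w="\<lambda>x. norm (h x)"])
    show "(\<lambda>x. h x * indicator V (E x)) \<in> borel_measurable haar_torus"
      using h borel_haar[OF mV] by measurable
    show "(\<lambda>x. h x * complex_of_real (\<psi> k (E x))) \<in> borel_measurable haar_torus" for k
      using h borel_haar_cont[OF continuous_on_of_real[OF continuous_on_compose2[OF c\<psi> continuous_E]]] by measurable
    show "integrable haar_torus (\<lambda>x. norm (h x))" using h by simp
    show "AE x in haar_torus. (\<lambda>k. h x * complex_of_real (\<psi> k (E x))) \<longlonglongrightarrow> h x * indicator V (E x)"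
      using lim by simp
    show "AE x in haar_torus. norm (h x * complex_of_real (\<psi> k (E x))) \<le> norm (h x)" for k
    proof (rule AE_I2)
      fix x :: "real^'n"
      have "\<bar>\<psi> k (E x)\<bar> \<le> 1" unfolding \<psi>_def by (simp add: infdist_nonneg)
      then have "norm (h x) * \<bar>\<psi> k (E x)\<bar> \<le> norm (h x) * 1" by (intro mult_left_mono) auto
      then show "norm (h x * complex_of_real (\<psi> k (E x))) \<le> norm (h x)" by (simp add: norm_mult)
    qed
  qed
  then show ?thesis using s0 LIMSEQ_unique by (simp add: LIMSEQ_const_iff)
qed

lemma E_inj:
  assumes x: "x \<in> box (\<chi> i. -1/2) (\<chi> i. 1/2)" and y: "y \<in> torus_box" and eq: "E x = E y"
  shows "x = y"
proof -
  have "x $ i = y $ i" for i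
  proof -
    have c: "cos (2*pi*(x $ i)) = cos (2*pi*(y $ i))" and s: "sin (2*pi*(x $ i)) = sin (2*pi*(y $ i))"
      using eq unfolding E_def by (auto simp: vec_eq_iff)
    then obtain n :: int where n: "2*pi*(x $ i) = 2*pi*(y $ i) + 2*pi*n"
      using sin_cos_eq_iff by blast
    then have "2*pi*(x $ i) = 2*pi*(y $ i + n)" by (simp add: algebra_simps)
    then have n': "x $ i = y $ i + n" by simp
    have "-1/2 < x $ i" "x $ i < 1/2" using x by (auto simp: mem_box_cart)
    moreover have "-1/2 \<le> y $ i" "y $ i \<le> 1/2" using y by (auto simp: torus_box_def)
    ultimately have "-1 < real_of_int n" "real_of_int n < 1" using n' by linarith+
    then have "n = 0" by linarith
    then show ?thesis using n' by simp
  qed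
  then show ?thesis by (simp add: vec_eq_iff)
qed

lemma open_U_zero:
  fixes h :: "real^'n::finite \<Rightarrow> complex"
  assumes h: "integrable haar_torus h" and z: "\<And>m. (\<integral>x. h x * ee m x \<partial>haar_torus) = 0"
    and U: "open U" "U \<subseteq> box (\<chi> i. -1/2) (\<chi> i. 1/2)"
  shows "(\<integral>x. h x * indicator U x \<partial>haar_torus) = 0"
proof -
  define K where "K = E ` (torus_box - U)"
  have "closed (- U)" using U(1) by (simp add: closed_Compl)
  then have "compact (torus_box \<inter> - U)" by (rule compact_Int_closed[OF compact_box])
  then have "compact (torus_box - U)" by (simp add: Diff_eq)
  then have "compact K" unfolding K_def by (intro compact_continuous_image continuous_intros)
  then have oV: "open (- K)" by (simp add: compact_imp_closed open_Compl)
  have eqi: "indicator (- K) (E x) = (indicator U x :: complex)" if "x \<in> torus_box" for x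
  proof (cases "x \<in> U")
    case True
    have "E x \<notin> K"
    proof
      assume "E x \<in> K"
      then obtain y where "y \<in> torus_box - U" "E x = E y" unfolding K_def by auto
      moreover have "x \<in> box (\<chi> i. -1/2) (\<chi> i. 1/2)" using True U(2) by auto
      ultimately show False using E_inj True by blast
    qed
    then show ?thesis using True by simp
  next
    case False
    then have "E x \<in> K" using that unfolding K_def by auto
    then show ?thesis using False by simp
  qed
  have "(\<integral>x. h x * indicator U x \<partial>haar_torus) = (\<integral>x. h x * indicator (- K) (E x) \<partial>haar_torus)"
    by (rule Bochner_Integration.integral_cong) (auto simp: eqi)
  also have "\<dots> = 0" by (rule open_V_zero[OF h z oV])
  finally show ?thesis .
qed

lemma boundary_null: "torus_box - box (\<chi> i. -1/2) ((\<chi> i. 1/2) :: real^'n) \<in> null_sets (lborel :: (real^'n::finite) measure)"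
proof -
  let ?a = "(\<chi> i. -1/2) :: real^'n" and ?b = "(\<chi> i. 1/2) :: real^'n"
  have eq: "emeasure lborel (cbox ?a ?b) = emeasure lborel (box ?a ?b)"
    by (simp only: emeasure_lborel_cbox_eq emeasure_lborel_box_eq)
  have "emeasure lborel (cbox ?a ?b - box ?a ?b) = emeasure lborel (cbox ?a ?b) - emeasure lborel (box ?a ?b)"
    by (rule emeasure_Diff) (auto simp: emeasure_lborel_box_eq box_subset_cbox)
  also have "\<dots> = 0" unfolding eq by (simp add: emeasure_lborel_box_eq)
  finally show ?thesis unfolding torus_box_cbox by (simp add: null_sets_def)
qed

lemma sf_lebesgue: "sigma_finite_measure (lebesgue :: ('a::euclidean_space) measure)"
proof -
  obtain A :: "'a set set" where A: "countable A" "A \<subseteq> sets lborel" "\<Union>A = space lborel" "\<forall>a\<in>A. emeasure lborel a \<noteq> \<infinity>"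
    using lborel.sigma_finite_countable by blast
  show ?thesis
    by (rule sigma_finite_measure.intro, rule exI[of _ A]) (use A in \<open>auto simp: emeasure_completion\<close>)
qed

lemma ae_zero:
  fixes h :: "real^'n::finite \<Rightarrow> complex"
  assumes h: "integrable haar_torus h" and z: "\<And>m. (\<integral>x. h x * ee m x \<partial>haar_torus) = 0"
  shows "AE x in haar_torus. h x = 0"
proof -
  define I where "I = (box (\<chi> i. -1/2) (\<chi> i. 1/2) :: (real^'n) set)"
  define H where "H x = indicator torus_box x *\<^sub>R h x" for x
  have HL: "integrable lebesgue H"
    using h unfolding haar_torus_def H_def[abs_def]
    by (subst (asm) integrable_restrict_space) auto
  have hL: "(\<integral>x. f x \<partial>haar_torus) = (\<integral>x. indicator torus_box x *\<^sub>R f x \<partial>lebesgue)" for f :: "real^'n \<Rightarrow> complex"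
    unfolding haar_torus_def by (subst integral_restrict_space) auto
  have aeI: "AE x in lebesgue. x \<in> torus_box \<longrightarrow> x \<in> I"
  proof -
    have "AE x in lborel. x \<notin> torus_box - I"
      using boundary_null unfolding I_def by (rule AE_not_in)
    then show ?thesis by (intro AE_completion) auto
  qed
  have openP: "(\<integral>x. indicator U x *\<^sub>R H x \<partial>lebesgue) = 0" if U: "open U" for U
  proof -
    have Hm: "H \<in> borel_measurable lebesgue" using HL by (rule borel_measurable_integrable)
    have UI: "U \<inter> I \<in> sets lebesgue" "U \<in> sets lebesgue" using U by (auto simp: I_def)
    have "(\<integral>x. indicator U x *\<^sub>R H x \<partial>lebesgue) = (\<integral>x. indicator (U \<inter> I) x *\<^sub>R H x \<partial>lebesgue)"
    proof (rule integral_cong_AE)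
      show "(\<lambda>x. indicator U x *\<^sub>R H x) \<in> borel_measurable lebesgue"
        using Hm UI by measurable
      show "(\<lambda>x. indicator (U \<inter> I) x *\<^sub>R H x) \<in> borel_measurable lebesgue"
        using Hm UI by measurable
      show "AE x in lebesgue. indicator U x *\<^sub>R H x = indicator (U \<inter> I) x *\<^sub>R H x"
        using aeI by eventually_elim (auto simp: H_def split: split_indicator)
    qed
    also have "\<dots> = (\<integral>x. indicator torus_box x *\<^sub>R (h x * indicator (U \<inter> I) x) \<partial>lebesgue)"
      by (rule Bochner_Integration.integral_cong) (auto simp: H_def split: split_indicator)
    also have "\<dots> = (\<integral>x. h x * indicator (U \<inter> I) x \<partial>haar_torus)"
      by (simp add: hL)
    also have "\<dots> = 0"
      by (rule open_U_zero[OF h z]) (use U in \<open>auto simp: I_def\<close>)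
    finally show ?thesis .
  qed
  have borelP: "(\<integral>x. indicator A x *\<^sub>R H x \<partial>lebesgue) = 0" if A: "A \<in> sets borel" for A
  proof -
    have Ast: "A \<in> sigma_sets UNIV {S. open S}" using A by (simp add: sets_borel)
    have "Int_stable {S :: (real^'n) set. open S}" by (auto simp: Int_stable_def)
    moreover have "{S :: (real^'n) set. open S} \<subseteq> Pow UNIV" by auto
    ultimately show ?thesis using Ast
    proof (induction rule: sigma_sets_induct_disjoint)
      case (basic A) then show ?case by (simp add: openP)
    next
      case empty then show ?case by simp
    next
      case (compl A)
      have Am: "A \<in> sets lebesgue" using compl(1) by (simp add: sets_borel[symmetric])
      have "(\<integral>x. indicator (UNIV - A) x *\<^sub>R H x \<partial>lebesgue) = (\<integral>x. H x - indicator A x *\<^sub>R H x \<partial>lebesgue)"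
        by (rule Bochner_Integration.integral_cong) (auto split: split_indicator)
      also have "\<dots> = (\<integral>x. H x \<partial>lebesgue) - (\<integral>x. indicator A x *\<^sub>R H x \<partial>lebesgue)"
        using HL Am by (intro Bochner_Integration.integral_diff integrable_mult_indicator) auto
      also have "(\<integral>x. H x \<partial>lebesgue) = 0" using openP[of UNIV] by simp
      finally show ?case using compl(2) by simp
    next
      case (union A)
      have Am: "A i \<in> sets lebesgue" for i using union(2) by (auto simp: sets_borel[symmetric])
      have "(LINT x:(\<Union>i. A i)|lebesgue. H x) = (\<Sum>i. (LINT x:(A i)|lebesgue. H x))"
      proof (rule lebesgue_integral_countable_add)
        show "A i \<in> sets lebesgue" for i by (rule Am)
        show "i \<noteq> j \<Longrightarrow> A i \<inter> A j = {}" for i j using union(1) by (auto simp: disjoint_family_on_def)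
        have "(\<Union>i. A i) \<in> sets lebesgue" using Am by auto
        then show "set_integrable lebesgue (\<Union>i. A i) H"
          unfolding set_integrable_def using HL by (rule integrable_mult_indicator)
      qed
      also have "\<dots> = 0" using union(3) by (simp add: set_lebesgue_integral_def)
      finally show ?case by (simp add: set_lebesgue_integral_def)
    qed
  qed
  have allP: "set_lebesgue_integral lebesgue A H = set_lebesgue_integral lebesgue A (\<lambda>_. 0)" if A: "A \<in> sets lebesgue" for A
  proof -
    from A obtain S N N' where SN: "A = S \<union> N" "N \<subseteq> N'" "N' \<in> null_sets lborel" "S \<in> sets lborel"
      by (rule sets_completionE)
    have "AE x in lebesgue. x \<notin> N'"
      using SN(3) by (intro AE_completion AE_not_in)
    moreover have Hm: "H \<in> borel_measurable lebesgue" using HL by (rule borel_measurable_integrable)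
    moreover have "S \<in> sets lebesgue" using SN(4) by auto
    ultimately have "(\<integral>x. indicator A x *\<^sub>R H x \<partial>lebesgue) = (\<integral>x. indicator S x *\<^sub>R H x \<partial>lebesgue)"
      using A by (intro integral_cong_AE) (use SN(1,2) in \<open>auto split: split_indicator\<close>)
    also have "\<dots> = 0" using SN(4) by (intro borelP) simp
    finally show ?thesis by (simp add: set_lebesgue_integral_def)
  qed
  have "AE x in lebesgue. H x = 0"
    by (rule sigma_finite_measure.density_unique_banach[OF sf_lebesgue HL _ allP]) simp_all
  then have "AE x in lebesgue. x \<in> torus_box \<longrightarrow> h x = 0"
    by eventually_elim (auto simp: H_def)
  then show ?thesis
    unfolding haar_torus_def by (subst AE_restrict_space_iff) auto
qed

lemma tail_small:
  fixes a :: "'a \<Rightarrow> real"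
  assumes "a summable_on UNIV" "\<epsilon> > 0"
  shows "\<exists>F0. finite F0 \<and> (\<forall>F. finite F \<and> F0 \<subseteq> F \<longrightarrow> infsum a UNIV - sum a F < \<epsilon>)"
proof -
  have "(sum a \<longlongrightarrow> infsum a UNIV) (finite_subsets_at_top UNIV)"
    using has_sum_infsum[OF assms(1)] by (simp add: has_sum_def)
  then have "eventually (\<lambda>F. dist (sum a F) (infsum a UNIV) < \<epsilon>) (finite_subsets_at_top UNIV)"
    using assms(2) by (rule tendstoD)
  then obtain X where X: "finite X" "\<And>Y. finite Y \<Longrightarrow> X \<subseteq> Y \<Longrightarrow> dist (sum a Y) (infsum a UNIV) < \<epsilon>"
    unfolding eventually_finite_subsets_at_top by auto
  show ?thesis
  proof (intro exI[of _ X] conjI allI impI)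
    fix F assume "finite F \<and> X \<subseteq> F"
    then have "dist (sum a F) (infsum a UNIV) < \<epsilon>" using X(2) by auto
    then show "infsum a UNIV - sum a F < \<epsilon>" by (simp add: dist_real_def)
  qed (use X in auto)
qed

lemma tail_bound:
  fixes c u :: "'a \<Rightarrow> complex"
  assumes c: "(\<lambda>m. norm (c m)) summable_on UNIV" and F: "finite F" and u: "\<And>m. norm (u m) \<le> 1"
  shows "norm (infsum (\<lambda>m. c m * u m) UNIV - (\<Sum>m\<in>F. c m * u m))
          \<le> infsum (\<lambda>m. norm (c m)) UNIV - (\<Sum>m\<in>F. norm (c m))"
proof -
  have nb: "norm (c m * u m) \<le> norm (c m)" for m
    using u[of m] by (simp add: norm_mult mult_left_le)
  have abs: "(\<lambda>m. norm (c m * u m)) summable_on A" for A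
  proof -
    have "(\<lambda>m. norm (c m * u m)) summable_on UNIV"
      by (rule summable_on_comparison_test[OF c]) (auto simp: nb)
    then show ?thesis by (rule summable_on_subset_banach) auto
  qed
  have s: "(\<lambda>m. c m * u m) summable_on UNIV"
    by (rule abs_summable_summable) (use abs in auto)
  have "infsum (\<lambda>m. c m * u m) UNIV - (\<Sum>m\<in>F. c m * u m) = infsum (\<lambda>m. c m * u m) (UNIV - F)"
    using F s by (subst infsum_Diff) auto
  also have "norm \<dots> \<le> infsum (\<lambda>m. norm (c m * u m)) (UNIV - F)"
    by (rule norm_infsum_bound) (use abs in auto)
  also have "\<dots> \<le> infsum (\<lambda>m. norm (c m)) (UNIV - F)"
    by (rule infsum_mono) (use abs summable_on_subset_banach[OF c] nb in auto)
  also have "\<dots> = infsum (\<lambda>m. norm (c m)) UNIV - (\<Sum>m\<in>F. norm (c m))"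
    using F c by (subst infsum_Diff) auto
  finally show ?thesis .
qed

lemma measure_haar_space: "measure haar_torus (torus_box :: (real^'n::finite) set) = 1"
  using emeasure_haar_box[where 'n='n] by (simp add: measure_def)

lemma ee_ortho:
  "(\<integral>x. ee m x * ee (-k) x \<partial>haar_torus) = (if m = k then 1 else (0::complex))"
proof -
  have "(\<integral>x. ee m x * ee (-k) x \<partial>haar_torus) = (\<integral>x. cis (2*pi*lat_inner x (m + - k)) \<partial>haar_torus)"
    by (simp only: ee_add) (simp only: ee_def)
  also have "\<dots> = (if m + - k = 0 then 1 else 0)" by (rule integral_ee)
  also have "(m + - k = 0) = (m = k)" by (metis add.right_inverse add_diff_cancel_right' diff_add_cancel diff_conv_add_uminus)
  finally show ?thesis by simp
qed

lemma integrable_ee_haar: "integrable haar_torus (\<lambda>x. ee m x * ee k x)"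
  by (rule haar.integrable_const_bound[where B=1]) (auto simp: norm_mult intro!: borel_haar)

lemma fourier_ee: "fourier_coeff f (-m) = (\<integral>x. complex_of_real (f x) * ee m x \<partial>haar_torus)"
  unfolding fourier_coeff_def ee_def lat_inner_uminus by simp

lemma inversion:
  fixes f :: "real^'n::finite \<Rightarrow> real"
  assumes f: "integrable haar_torus f"
    and summ: "(\<lambda>m. norm (fourier_coeff f m)) summable_on UNIV"
  shows "AE x in haar_torus. \<bar>f x\<bar> \<le> (\<Sum>\<^sub>\<infinity>m. norm (fourier_coeff f m))"
proof -
  define c where "c = fourier_coeff f"
  have summ': "(\<lambda>m. norm (c m)) summable_on UNIV" using summ by (simp add: c_def)
  define L where "L = (\<Sum>\<^sub>\<infinity>m. norm (c m))"
  define S where "S F x = (\<Sum>m\<in>F. c m * ee m x)" for F x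
  define g where "g x = (\<Sum>\<^sub>\<infinity>m. c m * ee m x)" for x
  have tb: "norm (g x - S F x) \<le> L - (\<Sum>m\<in>F. norm (c m))" if "finite F" for F x
    unfolding g_def S_def L_def by (rule tail_bound[OF summ' that]) simp
  have gL: "norm (g x) \<le> L" for x using tb[of "{}" x] by (simp add: S_def)
  have ts: "\<exists>F0. finite F0 \<and> (\<forall>F. finite F \<and> F0 \<subseteq> F \<longrightarrow> L - sum (\<lambda>m. norm (c m)) F < \<epsilon>)" if "\<epsilon> > 0" for \<epsilon>
    unfolding L_def by (rule tail_small[OF summ' that])
  define Fs where "Fs n = (SOME F0. finite F0 \<and> (\<forall>F. finite F \<and> F0 \<subseteq> F \<longrightarrow> L - sum (\<lambda>m. norm (c m)) F < inverse (real (Suc n))))" for n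
  have Fs: "finite (Fs n) \<and> (\<forall>F. finite F \<and> Fs n \<subseteq> F \<longrightarrow> L - sum (\<lambda>m. norm (c m)) F < inverse (real (Suc n)))" for n
    unfolding Fs_def by (rule someI_ex) (rule ts, simp)
  have Sm: "S F \<in> borel_measurable haar_torus" for F
    unfolding S_def by (intro borel_haar) measurable
  have gm: "g \<in> borel_measurable haar_torus"
  proof (rule borel_measurable_LIMSEQ_metric[where f="\<lambda>i. S (Fs i)"])
    show "S (Fs i) \<in> borel_measurable haar_torus" for i by (rule Sm)
    fix x :: "real^'n"
    have "(\<lambda>i. S (Fs i) x - g x) \<longlonglongrightarrow> 0"
    proof (rule Lim_null_comparison)
      show "\<forall>\<^sub>F i in sequentially. norm (S (Fs i) x - g x) \<le> inverse (real (Suc i))"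
      proof (rule always_eventually, rule allI)
        fix i
        have "norm (S (Fs i) x - g x) = norm (g x - S (Fs i) x)" by (simp add: norm_minus_commute)
        also have "\<dots> \<le> L - (\<Sum>m\<in>Fs i. norm (c m))" using Fs[of i] by (intro tb) auto
        also have "\<dots> \<le> inverse (real (Suc i))" using Fs[of i] by auto
        finally show "norm (S (Fs i) x - g x) \<le> inverse (real (Suc i))" .
      qed
      show "(\<lambda>i. inverse (real (Suc i))) \<longlonglongrightarrow> 0"
        using LIMSEQ_inverse_real_of_nat by simp
    qed
    then show "(\<lambda>i. S (Fs i) x) \<longlonglongrightarrow> g x" by (rule LIM_zero_cancel)
  qed
  have gi: "integrable haar_torus g"
    by (rule haar.integrable_const_bound[where B=L]) (use gL gm in auto)
  have intS: "integrable haar_torus (\<lambda>x. S F x * ee (-k) x)" for F k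
    by (rule haar.integrable_const_bound[where B="\<Sum>m\<in>F. norm (c m)"])
       (auto simp: S_def norm_mult intro!: borel_haar norm_sum[THEN order_trans] sum_mono)
  have ghat: "(\<integral>x. g x * ee (-k) x \<partial>haar_torus) = c k" for k
  proof -
    have "norm ((\<integral>x. g x * ee (-k) x \<partial>haar_torus) - c k) \<le> 0 + \<epsilon>" if eps: "\<epsilon> > 0" for \<epsilon>
    proof -
      obtain F0 where F0: "finite F0" "\<And>F. finite F \<Longrightarrow> F0 \<subseteq> F \<Longrightarrow> L - sum (\<lambda>m. norm (c m)) F < \<epsilon>"
        using ts[OF eps] by auto
      define F where "F = insert k F0"
      have F: "finite F" "k \<in> F" using F0 by (auto simp: F_def)
      have SF: "(\<integral>x. S F x * ee (-k) x \<partial>haar_torus) = c k"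
      proof -
        have "(\<integral>x. S F x * ee (-k) x \<partial>haar_torus) = (\<integral>x. (\<Sum>m\<in>F. c m * (ee m x * ee (-k) x)) \<partial>haar_torus)"
          unfolding S_def by (intro Bochner_Integration.integral_cong refl) (simp add: sum_distrib_left mult_ac)
        also have "\<dots> = (\<Sum>m\<in>F. c m * (\<integral>x. ee m x * ee (-k) x \<partial>haar_torus))"
          by (subst Bochner_Integration.integral_sum) (auto intro: integrable_ee_haar)
        also have "\<dots> = (\<Sum>m\<in>F. if m = k then c m else 0)"
          by (simp add: ee_ortho if_distrib cong: if_cong)
        also have "\<dots> = c k" using F by simp
        finally show ?thesis .
      qed
      have gi2: "integrable haar_torus (\<lambda>x. g x * ee (-k) x)"
      proof (rule haar.integrable_const_bound[where B=L])
        show "(\<lambda>x. g x * ee (-k) x) \<in> borel_measurable haar_torus"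
          using gm borel_haar[OF measurable_ee'[of "-k"]] by (rule borel_measurable_times)
      qed (use gL in \<open>auto simp: norm_mult\<close>)
      have "(\<integral>x. g x * ee (-k) x \<partial>haar_torus) - c k = (\<integral>x. (g x - S F x) * ee (-k) x \<partial>haar_torus)"
        unfolding SF[symmetric] using gi2 intS[of F k] by (simp add: left_diff_distrib)
      also have "norm \<dots> \<le> (\<integral>x. norm ((g x - S F x) * ee (-k) x) \<partial>haar_torus)"
        by (rule integral_norm_bound)
      also have "\<dots> \<le> (\<integral>x. (L - (\<Sum>m\<in>F. norm (c m))) \<partial>(haar_torus :: (real^'n) measure))"
      proof (rule Bochner_Integration.integral_mono)
        show "integrable haar_torus (\<lambda>x. norm ((g x - S F x) * ee (- k) x))"
          using gi2 intS[of F k] by (simp add: left_diff_distrib)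
      qed (use tb[OF F(1)] in \<open>auto simp: norm_mult\<close>)
      also have "\<dots> = L - (\<Sum>m\<in>F. norm (c m))" by (simp add: measure_haar_space)
      also have "\<dots> \<le> 0 + \<epsilon>" using F0(2)[of F] F by (auto simp: F_def less_imp_le subset_insertI)
      finally show ?thesis .
    qed
    then have "norm ((\<integral>x. g x * ee (-k) x \<partial>haar_torus) - c k) \<le> 0"
      by (rule field_le_epsilon)
    then show ?thesis by simp
  qed
  define h where "h x = complex_of_real (f x) - g x" for x
  have hi: "integrable haar_torus h" unfolding h_def using f gi by auto
  have hz: "(\<integral>x. h x * ee m x \<partial>haar_torus) = 0" for m
  proof -
    have fi: "integrable haar_torus (\<lambda>x. complex_of_real (f x) * ee m x)"
      by (rule integrable_mult_bounded[where B=1]) (use f in \<open>auto intro: borel_haar\<close>)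
    have gi3: "integrable haar_torus (\<lambda>x. g x * ee m x)"
      by (rule integrable_mult_bounded[where B=1]) (use gi in \<open>auto intro: borel_haar\<close>)
    have "(\<integral>x. h x * ee m x \<partial>haar_torus) = (\<integral>x. complex_of_real (f x) * ee m x \<partial>haar_torus) - (\<integral>x. g x * ee m x \<partial>haar_torus)"
      unfolding h_def using fi gi3 by (simp add: left_diff_distrib)
    also have "\<dots> = c (-m) - c (-m)"
      using ghat[of "-m"] by (simp add: c_def fourier_ee)
    finally show ?thesis by simp
  qed
  have "AE x in haar_torus. h x = 0" by (rule ae_zero[OF hi hz])
  then show ?thesis
  proof eventually_elim
    case (elim x)
    then have "complex_of_real (f x) = g x" by (simp add: h_def)
    then have "\<bar>f x\<bar> = norm (g x)" by (metis norm_of_real)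
    then show ?case using gL[of x] by (simp add: L_def c_def)
  qed
qed

theorem mainTheorem12:
  fixes f :: "real^'n \<Rightarrow> real" and s :: real
  assumes "s = 1 \<or> s = -1"
    and "integrable haar_torus f"
    and "\<not> (AE x in haar_torus. f x = 0)"
    and "\<forall>m. Im (fourier_coeff f m) = 0"
    and "(\<lambda>m. norm (fourier_coeff f m)) summable_on UNIV"
    and "(\<integral>x. f x \<partial>haar_torus) \<le> 0"
    and "(\<Sum>\<^sub>\<infinity>m. s * Re (fourier_coeff f m)) \<le> 0"
  shows "emeasure haar_torus {x \<in> torus_box. f x < 0}
           * emeasure (count_space UNIV) {m. s * Re (fourier_coeff f m) < 0} \<ge> 1/16"
proof -
  note s = assms(1) and f = assms(2) and nz = assms(3) and im = assms(4) and summ = assms(5)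
    and intf = assms(6) and ssum = assms(7)
  define c where "c = fourier_coeff f"
  define L where "L = (\<Sum>\<^sub>\<infinity>m. norm (c m))"
  define t where "t m = s * Re (c m)" for m
  define A where "A = {x \<in> torus_box. f x < 0}"
  define B where "B = {m. t m < 0}"
  define N1 where "N1 = (\<integral>x. \<bar>f x\<bar> \<partial>haar_torus)"
  define lam where "lam = measure haar_torus A"
  have s1: "\<bar>s\<bar> = 1" using s by auto
  have nt: "norm (c m) = \<bar>t m\<bar>" for m
    using im s1 by (simp add: c_def t_def cmod_eq_Re abs_mult)
  have summ': "(\<lambda>m. norm (c m)) summable_on UNIV" using summ by (simp add: c_def)
  have L0: "L \<ge> 0" unfolding L_def by (rule infsum_nonneg) simp
  have cN: "norm (c m) \<le> N1" for m
  proof -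
    have "norm (c m) \<le> (\<integral>x. norm (complex_of_real (f x) * cis (- 2 * pi * lat_inner x m)) \<partial>haar_torus)"
      unfolding c_def fourier_coeff_def by (rule integral_norm_bound)
    also have "\<dots> = N1" unfolding N1_def by (simp add: norm_mult)
    finally show ?thesis .
  qed
  have fm: "f \<in> borel_measurable haar_torus" using f by (rule borel_measurable_integrable)
  have N1pos: "N1 > 0"
  proof -
    have "N1 \<ge> 0" unfolding N1_def by simp
    moreover have "N1 \<noteq> 0"
    proof
      assume "N1 = 0"
      then have "AE x in haar_torus. \<bar>f x\<bar> = 0"
        unfolding N1_def using f by (subst (asm) integral_nonneg_eq_0_iff_AE) auto
      then have "AE x in haar_torus. f x = 0" by simp
      with nz show False by simp
    qed
    ultimately show ?thesis by simp
  qed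
  have Aset: "A \<in> sets haar_torus"
  proof -
    have "A = {x \<in> space haar_torus. f x < 0}" by (simp add: A_def)
    also have "\<dots> \<in> sets haar_torus" using fm by measurable
    finally show ?thesis .
  qed
  have emA: "emeasure haar_torus A = ennreal lam"
    unfolding lam_def by (rule haar.emeasure_eq_measure)
  have lam0: "lam \<ge> 0" unfolding lam_def by simp
  have aeb: "AE x in haar_torus. \<bar>f x\<bar> \<le> L"
    using inversion[OF f summ] by (simp add: L_def c_def)
  have key1: "N1 \<le> 2 * L * lam"
  proof -
    have fA: "integrable haar_torus (\<lambda>x. - f x * indicator A x)"
      using f Aset by (intro integrable_real_mult_indicator) auto
    have "N1 = (\<integral>x. f x + 2 * (- f x * indicator A x) \<partial>haar_torus)"
      unfolding N1_def by (rule Bochner_Integration.integral_cong) (auto simp: A_def indicator_def)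
    also have "\<dots> = (\<integral>x. f x \<partial>haar_torus) + 2 * (\<integral>x. - f x * indicator A x \<partial>haar_torus)"
      using f fA by simp
    also have "\<dots> \<le> 2 * (\<integral>x. - f x * indicator A x \<partial>haar_torus)" using intf by simp
    also have "(\<integral>x. - f x * indicator A x \<partial>haar_torus) \<le> (\<integral>x. L * indicator A x \<partial>haar_torus)"
    proof (rule integral_mono_AE)
      show "integrable haar_torus (\<lambda>x. L * indicator A x)"
        using Aset by (intro integrable_real_mult_indicator) auto
      show "AE x in haar_torus. - f x * indicator A x \<le> L * indicator A x"
        using aeb by eventually_elim (auto simp: indicator_def)
    qed (rule fA)
    also have "(\<integral>x. L * indicator A x \<partial>haar_torus) = L * lam"
      using Aset by (simp add: lam_def Int_absorb2 A_def)
    finally show ?thesis by simp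
  qed
  have lampos: "lam > 0"
  proof (rule ccontr)
    assume "\<not> lam > 0"
    then have "lam = 0" using lam0 by simp
    then show False using key1 N1pos by simp
  qed
  define u where "u m = \<bar>t m\<bar> - t m" for m
  have sabs: "(\<lambda>m. \<bar>t m\<bar>) summable_on UNIV" using summ' by (simp add: nt)
  have st: "t summable_on UNIV"
    by (rule abs_summable_summable) (use sabs in simp)
  have su: "u summable_on UNIV"
  proof (rule summable_on_comparison_test)
    show "(\<lambda>m. 2 * \<bar>t m\<bar>) summable_on UNIV" using sabs by (rule summable_on_cmult_right)
  qed (auto simp: u_def)
  have key2: "L \<le> infsum u UNIV"
  proof -
    have "L = infsum (\<lambda>m. t m + u m) UNIV" unfolding L_def u_def by (simp add: nt)
    also have "\<dots> = infsum t UNIV + infsum u UNIV" using st su by (rule infsum_add)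
    also have "infsum t UNIV \<le> 0"
    proof -
      have "t = (\<lambda>m. s * Re (fourier_coeff f m))" by (auto simp: t_def c_def)
      then show ?thesis using ssum by simp
    qed
    finally show ?thesis by simp
  qed
  have uB: "u m = 0" if "m \<notin> B" for m using that by (simp add: u_def B_def)
  show ?thesis
  proof (cases "finite B")
    case True
    have "infsum u UNIV = infsum u B" by (rule infsum_cong_neutral) (auto simp: uB)
    also have "\<dots> = (\<Sum>m\<in>B. u m)" using True by simp
    also have "\<dots> \<le> (\<Sum>m\<in>B. 2 * N1)"
    proof (rule sum_mono)
      fix m assume "m \<in> B"
      have "u m \<le> 2 * \<bar>t m\<bar>" by (simp add: u_def)
      also have "\<dots> \<le> 2 * N1" using cN[of m] by (simp add: nt)
      finally show "u m \<le> 2 * N1" .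
    qed
    also have "\<dots> = 2 * N1 * real (card B)" by simp
    finally have "L \<le> 2 * N1 * real (card B)" using key2 by simp
    then have "N1 \<le> 2 * (2 * N1 * real (card B)) * lam"
      using key1 lam0 by (smt (verit) mult_right_mono)
    then have "N1 * 1 \<le> N1 * (4 * real (card B) * lam)" by (simp add: algebra_simps)
    then have q: "1 \<le> 4 * real (card B) * lam" using N1pos by (simp add: mult_le_cancel_left_pos)
    have "ennreal (1/16) \<le> ennreal (lam * real (card B))" using q lam0 by (intro ennreal_leI) (simp add: mult_ac)
    also have "\<dots> = ennreal lam * of_nat (card B)" by (simp add: ennreal_mult' ennreal_of_nat_eq_real_of_nat lam0)
    finally have "ennreal (1/16) \<le> ennreal lam * of_nat (card B)" .
    moreover have "(1/16::ennreal) = ennreal (1/16)"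
      by (metis divide_ennreal ennreal_1 ennreal_numeral zero_le_one zero_less_numeral)
    ultimately show ?thesis
      using True by (simp add: emA[unfolded A_def] B_def t_def c_def)
  next
    case False
    then have "emeasure (count_space UNIV) B = \<infinity>" by simp
    moreover have "ennreal lam \<noteq> 0" using lampos by simp
    ultimately show ?thesis
      using emA by (simp add: A_def B_def t_def c_def ennreal_mult_top)
  qed
qed

end
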